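(* Let $N = n+1\ge 3$ be odd and let $\boldsymbol{\lambda} = (\lambda_1,\dots,\lambda_N)\in\Lambda_N$. The upward-pointing inner normal vector of the lifted simplex $\Omega_\omega(G^{\mathbf{0}}_{\boldsymbol{\lambda}}) = \operatorname{conv}\{(\mathbf{a},\omega(\mathbf{a}))\mid \mathbf{a}\text{ a vertex of } G^{\mathbf{0}}_{\boldsymbol{\lambda}}\}\subset\mathbb{R}^{N}$ (normalized to have last coordinate $1$) is $\mathbf{x} = (x_1,\dots,x_N)$ where \[ x_k = \begin{cases} \sum_{i=1}^k \lambda_i & \text{if } k < N,\\ 1 & \text{if } k = N.\end{cases} \]
   Context: $\mathbf{e}_1,\dots,\mathbf{e}_n$ is the standard basis of $\mathbb{R}^n$, with $\mathbf{e}_0=\mathbf{e}_N=\mathbf{0}$. For odd $N$, $\Lambda_N = \bigcup_{j=1}^N\Lambda_{j,N}$ with $\Lambda_{j,N} = \{(\lambda_1,\dots,\lambda_N)\mid\lambda_j=0,\ \lambda_i\in\{-1,1\}\text{ for }i\neq j,\ \sum_i\lambda_i=0\}$, and for $\boldsymbol{\lambda}\in\Lambda_{j,N}$, $G^{\mathbf{0}}_{\boldsymbol{\lambda}} = \operatorname{conv}(\{\mathbf{0}\}\cup\{\lambda_i(\mathbf{e}_{i-1}-\mathbf{e}_i)\mid 1\le i\le N,\ i\ne j\})$. The height function is $\omega(\mathbf{0})=0$ and $\omega(\mathbf{a})=1$ for $\mathbf{a}\ne\mathbf{0}$. These simplices are the lower facets of the lifted adjacency polytope $\operatorname{conv}\{(\mathbf{a},\omega(\mathbf{a}))\mid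 \mathbf{a}\in\{\mathbf{0}\}\cup\{\mathbf{e}_i-\mathbf{e}_j\mid\{i,j\}\text{ an edge of the cycle } C_N\}\}$, and "upward-pointing inner normal" refers to this lifted polytope (upward-pointing meaning positive last coordinate). *)

theory Defs
  imports Complex_Main
begin

text \<open>Points of R^m are modelled as functions nat => real whose coordinates are
  indexed by 1..m (other coordinates are 0).  Here N = n+1, points of R^n use
  coordinates 1..N-1, and lifted points in R^N use coordinate N for the height.\<close>

definition conv :: "(nat \<Rightarrow> real) set \<Rightarrow> (nat \<Rightarrow> real) set" where
  "conv S = {p. \<exists>F u. finite F \<and> F \<subseteq> S \<and> F \<noteq> {} \<and> (\<forall>v\<in>F. u v \<ge> 0)
              \<and> sum u F = 1 \<and> p = (\<lambda>k. \<Sum>v\<in>F. u v * v k)}"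

text \<open>Standard basis vector e_i of R^n (n = N-1); e_0 = e_N = 0.\<close>
definition ebas :: "nat \<Rightarrow> nat \<Rightarrow> nat \<Rightarrow> real" where
  "ebas N i = (\<lambda>k. if k = i \<and> 1 \<le> i \<and> i \<le> N - 1 then 1 else 0)"

definition Lambda_j :: "nat \<Rightarrow> nat \<Rightarrow> (nat \<Rightarrow> int) set" where
  "Lambda_j N j = {lam. lam j = 0 \<and> (\<forall>i\<in>{1..N} - {j}. lam i \<in> {-1, 1})
                   \<and> (\<forall>i. i \<notin> {1..N} \<longrightarrow> lam i = 0) \<and> (\<Sum>i=1..N. lam i) = 0}"

definition Lambda :: "nat \<Rightarrow> (nat \<Rightarrow> int) set" where
  "Lambda N = (\<Union>j\<in>{1..N}. Lambda_j N j)"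

definition G_verts :: "nat \<Rightarrow> nat \<Rightarrow> (nat \<Rightarrow> int) \<Rightarrow> (nat \<Rightarrow> real) set" where
  "G_verts N j lam = {\<lambda>k. 0} \<union>
     {(\<lambda>k. of_int (lam i) * (ebas N (i - 1) k - ebas N i k)) | i. i \<in> {1..N} \<and> i \<noteq> j}"

definition G0 :: "nat \<Rightarrow> nat \<Rightarrow> (nat \<Rightarrow> int) \<Rightarrow> (nat \<Rightarrow> real) set" where
  "G0 N j lam = conv (G_verts N j lam)"

definition omega :: "(nat \<Rightarrow> real) \<Rightarrow> real" where
  "omega a = (if a = (\<lambda>k. 0) then 0 else 1)"

definition lift :: "nat \<Rightarrow> (nat \<Rightarrow> real) \<Rightarrow> (nat \<Rightarrow> real)" where
  "lift N a = (\<lambda>k. if k = N then omega a else a k)"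

definition cycle_edge :: "nat \<Rightarrow> nat \<Rightarrow> nat \<Rightarrow> bool" where
  "cycle_edge N i j \<longleftrightarrow> i \<in> {1..N} \<and> j \<in> {1..N} \<and>
     (j = i + 1 \<or> i = j + 1 \<or> (i = N \<and> j = 1) \<or> (i = 1 \<and> j = N))"

definition adj_points :: "nat \<Rightarrow> (nat \<Rightarrow> real) set" where
  "adj_points N = {\<lambda>k. 0} \<union> {(\<lambda>k. ebas N i k - ebas N j k) | i j. cycle_edge N i j}"

definition lifted_polytope :: "nat \<Rightarrow> (nat \<Rightarrow> real) set" where
  "lifted_polytope N = conv (lift N ` adj_points N)"

definition lifted_simplex :: "nat \<Rightarrow> nat \<Rightarrow> (nat \<Rightarrow> int) \<Rightarrow> (nat \<Rightarrow> real) set" where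
  "lifted_simplex N j lam = conv (lift N ` G_verts N j lam)"

definition ip :: "nat \<Rightarrow> (nat \<Rightarrow> real) \<Rightarrow> (nat \<Rightarrow> real) \<Rightarrow> real" where
  "ip N y p = (\<Sum>k=1..N. y k * p k)"

end

theory Submission imports Defs begin

lemma ip_comb: "ip N y (\<lambda>k. \<Sum>v\<in>F. u v * v k) = (\<Sum>v\<in>F. u v * ip N y v)"
proof -
  have "ip N y (\<lambda>k. \<Sum>v\<in>F. u v * v k) = (\<Sum>k=1..N. \<Sum>v\<in>F. y k * (u v * v k))"
    unfolding ip_def by (simp add: sum_distrib_left)
  also have "\<dots> = (\<Sum>v\<in>F. \<Sum>k=1..N. y k * (u v * v k))" by (rule sum.swap)
  also have "\<dots> = (\<Sum>v\<in>F. u v * ip N y v)"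
    unfolding ip_def by (simp add: sum_distrib_left mult_ac)
  finally show ?thesis .
qed

lemma conv_sub: "S \<subseteq> conv S"
proof
  fix v assume "v \<in> S"
  then show "v \<in> conv S" unfolding conv_def
    by (intro CollectI exI[of _ "{v}"] exI[of _ "\<lambda>_. 1"]) auto
qed

lemma conv_mono: "S \<subseteq> T \<Longrightarrow> conv S \<subseteq> conv T"
  unfolding conv_def by blast

lemma conv_nonneg:
  assumes "\<forall>v\<in>S. ip N y v \<ge> 0" "p \<in> conv S"
  shows "ip N y p \<ge> 0"
proof -
  obtain F u where F: "finite F" "F \<subseteq> S" "\<forall>v\<in>F. u v \<ge> 0" "p = (\<lambda>k. \<Sum>v\<in>F. u v * v k)"
    using assms(2) unfolding conv_def by blast
  have "ip N y p = (\<Sum>v\<in>F. u v * ip N y v)" using F(4) ip_comb by simp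
  also have "\<dots> \<ge> 0" using F assms(1) by (intro sum_nonneg) auto
  finally show ?thesis .
qed

lemma conv_zero_rev:
  assumes "\<forall>v\<in>S. ip N y v = 0" "p \<in> conv S"
  shows "ip N y p = 0"
proof -
  obtain F u where F: "finite F" "F \<subseteq> S" "\<forall>v\<in>F. u v \<ge> 0" "p = (\<lambda>k. \<Sum>v\<in>F. u v * v k)"
    using assms(2) unfolding conv_def by blast
  have "ip N y p = (\<Sum>v\<in>F. u v * ip N y v)" using F(4) ip_comb by simp
  also have "\<dots> = 0" using F assms(1) by (intro sum.neutral) auto
  finally show ?thesis .
qed

lemma conv_zero:
  assumes "\<forall>v\<in>S. ip N y v \<ge> 0" "p \<in> conv S" "ip N y p = 0"
  shows "p \<in> conv {v\<in>S. ip N y v = 0}"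
proof -
  obtain F u where F: "finite F" "F \<subseteq> S" "F \<noteq> {}" "\<forall>v\<in>F. u v \<ge> 0" "sum u F = 1"
     "p = (\<lambda>k. \<Sum>v\<in>F. u v * v k)"
    using assms(2) unfolding conv_def by blast
  have s0: "(\<Sum>v\<in>F. u v * ip N y v) = 0" using F(6) ip_comb assms(3) by simp
  have nn: "\<forall>v\<in>F. u v * ip N y v \<ge> 0" using F(2) F(4) assms(1) by auto
  have z: "\<forall>v\<in>F. u v * ip N y v = 0"
    using sum_nonneg_eq_0_iff[OF F(1), of "\<lambda>v. u v * ip N y v"] nn s0 by simp
  define F' where "F' = {v\<in>F. u v \<noteq> 0}"
  have sub0: "F' \<subseteq> F" unfolding F'_def by auto
  have fin: "finite F'" using F(1) sub0 finite_subset by blast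
  have "sum u F' = sum u F"
    by (rule sum.mono_neutral_left[OF F(1) sub0]) (auto simp: F'_def)
  then have s1: "sum u F' = 1" using F(5) by simp
  have ne: "F' \<noteq> {}" using s1 by auto
  have pe: "p = (\<lambda>k. \<Sum>v\<in>F'. u v * v k)"
  proof
    fix k
    show "p k = (\<Sum>v\<in>F'. u v * v k)" unfolding F(6)
      by (rule sum.mono_neutral_right[OF F(1) sub0]) (auto simp: F'_def)
  qed
  have sub: "F' \<subseteq> {v\<in>S. ip N y v = 0}" using z F(2) sub0 by (auto simp: F'_def)
  have nn': "\<forall>v\<in>F'. u v \<ge> 0" using F(4) sub0 by auto
  show ?thesis unfolding conv_def
    by (rule CollectI, rule exI[of _ F'], rule exI[of _ u]) (use fin sub ne nn' s1 pe in simp)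
qed

definition Yv :: "nat \<Rightarrow> (nat \<Rightarrow> real) \<Rightarrow> nat \<Rightarrow> real" where
  "Yv N y i = (if 1 \<le> i \<and> i \<le> N - 1 then y i else 0)"

lemma sum_ebas: "(\<Sum>k=1..N. y k * ebas N i k) = Yv N y i"
proof -
  have "(\<Sum>k=1..N. y k * ebas N i k) = (\<Sum>k=1..N. if k = i then (if 1 \<le> i \<and> i \<le> N - 1 then y i else 0) else 0)"
    unfolding ebas_def by (intro sum.cong) auto
  also have "\<dots> = Yv N y i" unfolding Yv_def by (auto simp: sum.delta)
  finally show ?thesis .
qed

lemma sum_diff: "(\<Sum>k=1..N. y k * (c * (ebas N a k - ebas N b k))) = c * (Yv N y a - Yv N y b)"
proof -
  have "(\<Sum>k=1..N. y k * (c * (ebas N a k - ebas N b k))) =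
     c * ((\<Sum>k=1..N. y k * ebas N a k) - (\<Sum>k=1..N. y k * ebas N b k))"
    by (simp add: sum_distrib_left sum_subtractf algebra_simps)
  then show ?thesis using sum_ebas[of y N a] sum_ebas[of y N b] by simp
qed

lemma ip_lift:
  assumes "N \<ge> 1" "v N = 0"
  shows "ip N y (lift N v) = (\<Sum>k=1..N. y k * v k) + y N * omega v"
proof -
  have "ip N y (lift N v) = (\<Sum>k=1..N. y k * v k + (if k = N then y N * omega v else 0))"
    unfolding ip_def lift_def using assms(2) by (intro sum.cong) auto
  also have "\<dots> = (\<Sum>k=1..N. y k * v k) + y N * omega v"
    using assms(1) by (simp add: sum.distrib)
  finally show ?thesis .
qed

lemma ebas_N: "N \<ge> 1 \<Longrightarrow> ebas N i N = 0"
  unfolding ebas_def by auto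


theorem corollary5p8:
  fixes N j :: nat and lam :: "nat \<Rightarrow> int"
  assumes "odd N" and "N \<ge> 3" and "j \<in> {1..N}" and "lam \<in> Lambda_j N j"
  defines "x \<equiv> (\<lambda>k. if 1 \<le> k \<and> k < N then real_of_int (\<Sum>i=1..k. lam i)
                     else if k = N then 1 else 0)"
  shows "x N = 1
    \<and> (\<forall>p\<in>lifted_polytope N. ip N x p \<ge> 0)
    \<and> {p\<in>lifted_polytope N. ip N x p = 0} = lifted_simplex N j lam
    \<and> (\<forall>y. (\<forall>k. k \<notin> {1..N} \<longrightarrow> y k = 0) \<longrightarrow> y N = 1 \<longrightarrow>
           (\<exists>c. \<forall>p\<in>lifted_simplex N j lam. ip N y p = c) \<longrightarrow> y = x)"
proof -
  have N1: "N \<ge> 1" using assms(2) by simp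
  have jr: "1 \<le> j" "j \<le> N" using assms(3) by auto
  have lamj: "lam j = 0" and lampm: "\<And>i. i \<in> {1..N} \<Longrightarrow> i \<noteq> j \<Longrightarrow> lam i = 1 \<or> lam i = -1"
    and lamsum: "(\<Sum>i=1..N. lam i) = 0"
    using assms(4) unfolding Lambda_j_def by auto
  have lamr: "\<And>i. i \<in> {1..N} \<Longrightarrow> lam i = 1 \<or> lam i = -1 \<or> lam i = 0"
    using lampm lamj by metis
  define P where "P i = real_of_int (\<Sum>l=1..i. lam l)" for i
  have P0: "P 0 = 0" by (simp add: P_def)
  have PN: "P N = 0" unfolding P_def using lamsum by (metis of_int_0)
  have PS: "\<And>i. P (Suc i) = P i + of_int (lam (Suc i))" unfolding P_def by simp
  have P1: "P 1 = of_int (lam 1)" using PS[of 0] P0 by simp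
  have YP: "\<And>i. i \<le> N \<Longrightarrow> Yv N x i = P i"
  proof -
    fix i assume "i \<le> N"
    then show "Yv N x i = P i" unfolding Yv_def x_def using P0 PN
      by (cases "i = 0"; cases "i = N") (auto simp: P_def)
  qed
  have xN: "x N = 1" unfolding x_def by simp
  have ipd: "\<And>y c a b. ip N y (lift N (\<lambda>k. c * (ebas N a k - ebas N b k)))
      = c * (Yv N y a - Yv N y b) + y N * omega (\<lambda>k. c * (ebas N a k - ebas N b k))"
    using ip_lift[OF N1] sum_diff ebas_N[OF N1] by simp
  have ipd1: "\<And>y a b. ip N y (lift N (\<lambda>k. ebas N a k - ebas N b k))
      = (Yv N y a - Yv N y b) + y N * omega (\<lambda>k. ebas N a k - ebas N b k)"
    using ipd[of _ 1] by simp
  have ip0: "\<And>y. ip N y (lift N (\<lambda>k. 0)) = 0" unfolding ip_def lift_def omega_def by simp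
  have e0: "ebas N 0 = ebas N N" unfolding ebas_def using N1 by (intro ext) auto
  have zG: "(\<lambda>k. 0) \<in> G_verts N j lam" unfolding G_verts_def by simp
  have zA: "(\<lambda>k. 0) \<in> adj_points N" unfolding adj_points_def by simp
  have gvG: "\<And>i. i \<in> {1..N} \<Longrightarrow> i \<noteq> j \<Longrightarrow>
      (\<lambda>k. of_int (lam i) * (ebas N (i - 1) k - ebas N i k)) \<in> G_verts N j lam"
    unfolding G_verts_def by blast
  have claimA: "ip N x (lift N v) \<ge> 0 \<and> (ip N x (lift N v) = 0 \<longrightarrow> v \<in> G_verts N j lam)"
    if v: "v \<in> adj_points N" for v
  proof (cases "v = (\<lambda>k. 0)")
    case True
    then show ?thesis using ip0 zG by simp
  next
    case False
    then have om: "omega v = 1" unfolding omega_def by simp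
    from v False obtain a b where vab: "v = (\<lambda>k. ebas N a k - ebas N b k)" and ce: "cycle_edge N a b"
      unfolding adj_points_def by blast
    have ab: "a \<in> {1..N}" "b \<in> {1..N}" using ce unfolding cycle_edge_def by auto
    have ipv: "ip N x (lift N v) = P a - P b + 1"
      using ipd1[of x a b] om vab YP ab xN by simp
    from ce consider "b = a + 1" | "a = b + 1" | "a = N \<and> b = 1" | "a = 1 \<and> b = N"
      unfolding cycle_edge_def by blast
    then show ?thesis
    proof cases
      case 1
      then have ipv': "ip N x (lift N v) = 1 - of_int (lam (a+1))" using ipv PS[of a] by simp
      moreover have "lam (a+1) = 1 \<or> lam (a+1) = -1 \<or> lam (a+1) = 0" using lamr ab 1 by blast
      moreover have "v \<in> G_verts N j lam" if "lam (a+1) = 1"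
      proof -
        have "a + 1 \<noteq> j" using that lamj by auto
        then have "(\<lambda>k. of_int (lam (a+1)) * (ebas N (a + 1 - 1) k - ebas N (a+1) k)) \<in> G_verts N j lam"
          using gvG ab 1 by blast
        then show ?thesis using that vab 1 by simp
      qed
      ultimately show ?thesis by auto
    next
      case 2
      then have ipv': "ip N x (lift N v) = 1 + of_int (lam (b+1))" using ipv PS[of b] by simp
      moreover have "lam (b+1) = 1 \<or> lam (b+1) = -1 \<or> lam (b+1) = 0" using lamr ab 2 by blast
      moreover have "v \<in> G_verts N j lam" if "lam (b+1) = -1"
      proof -
        have "b + 1 \<noteq> j" using that lamj by auto
        then have "(\<lambda>k. of_int (lam (b+1)) * (ebas N (b + 1 - 1) k - ebas N (b+1) k)) \<in> G_verts N j lam"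
          using gvG ab 2 by blast
        then show ?thesis using that vab 2 by simp
      qed
      ultimately show ?thesis by auto
    next
      case 3
      then have ipv': "ip N x (lift N v) = 1 - of_int (lam 1)" using ipv PN P1 by simp
      moreover have "lam 1 = 1 \<or> lam 1 = -1 \<or> lam 1 = 0" using lamr ab 3 by blast
      moreover have "v \<in> G_verts N j lam" if "lam 1 = 1"
      proof -
        have "1 \<noteq> j" using that lamj by auto
        then have "(\<lambda>k. of_int (lam 1) * (ebas N (1 - 1) k - ebas N 1 k)) \<in> G_verts N j lam"
          using gvG[of 1] N1 by simp
        then show ?thesis using that vab 3 e0 by simp
      qed
      ultimately show ?thesis by auto
    next
      case 4
      then have ipv': "ip N x (lift N v) = 1 + of_int (lam 1)" using ipv PN P1 by simp
      moreover have "lam 1 = 1 \<or> lam 1 = -1 \<or> lam 1 = 0" using lamr ab 4 by blast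
      moreover have "v \<in> G_verts N j lam" if "lam 1 = -1"
      proof -
        have "1 \<noteq> j" using that lamj by auto
        then have "(\<lambda>k. of_int (lam 1) * (ebas N (1 - 1) k - ebas N 1 k)) \<in> G_verts N j lam"
          using gvG[of 1] N1 by simp
        then show ?thesis using that vab 4 e0 by simp
      qed
      ultimately show ?thesis by auto
    qed
  qed
  have claimB: "(\<lambda>k. of_int (lam i) * (ebas N (i - 1) k - ebas N i k)) \<in> adj_points N
      \<and> (\<lambda>k. of_int (lam i) * (ebas N (i - 1) k - ebas N i k)) \<noteq> (\<lambda>k. 0)"
    if i: "i \<in> {1..N}" "i \<noteq> j" for i
  proof
    let ?g = "\<lambda>k. of_int (lam i) * (ebas N (i - 1) k - ebas N i k)"
    have pm: "lam i = 1 \<or> lam i = -1" using lampm i by blast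
    show "?g \<noteq> (\<lambda>k. 0)"
    proof (cases "i \<le> N - 1")
      case True
      then have "?g i = - of_int (lam i)" using i unfolding ebas_def by auto
      then show ?thesis using pm by (metis zero_neq_neg_one one_neq_zero of_int_eq_0_iff neg_equal_0_iff_equal)
    next
      case False
      then have "i = N" using i by auto
      then have "?g (N - 1) = of_int (lam i)" using assms(2) unfolding ebas_def by auto
      then show ?thesis using pm by (metis one_neq_zero of_int_eq_0_iff zero_neq_neg_one)
    qed
    show "?g \<in> adj_points N"
    proof (cases "i = 1")
      case True
      show ?thesis using pm
      proof
        assume l: "lam i = 1"
        have "?g = (\<lambda>k. ebas N N k - ebas N 1 k)" using True l e0 by simp
        moreover have "cycle_edge N N 1" unfolding cycle_edge_def using N1 by auto
        ultimately show ?thesis unfolding adj_points_def by blast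
      next
        assume l: "lam i = -1"
        have "?g = (\<lambda>k. ebas N 1 k - ebas N N k)" using True l e0 by simp
        moreover have "cycle_edge N 1 N" unfolding cycle_edge_def using N1 by auto
        ultimately show ?thesis unfolding adj_points_def by blast
      qed
    next
      case False
      then have i2: "i - 1 \<ge> 1" "(i - 1) + 1 = i" using i by auto
      show ?thesis using pm
      proof
        assume l: "lam i = 1"
        have "?g = (\<lambda>k. ebas N (i - 1) k - ebas N i k)" using l by simp
        moreover have "cycle_edge N (i - 1) i" unfolding cycle_edge_def using i i2 by auto
        ultimately show ?thesis unfolding adj_points_def by blast
      next
        assume l: "lam i = -1"
        have "?g = (\<lambda>k. ebas N i k - ebas N (i - 1) k)" using l by simp
        moreover have "cycle_edge N i (i - 1)" unfolding cycle_edge_def using i i2 by auto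
        ultimately show ?thesis unfolding adj_points_def by blast
      qed
    qed
  qed
  have ipg: "ip N y (lift N (\<lambda>k. of_int (lam i) * (ebas N (i - 1) k - ebas N i k)))
       = of_int (lam i) * (Yv N y (i - 1) - Yv N y i) + y N"
    if i: "i \<in> {1..N}" "i \<noteq> j" for i y
    using ipd[of y "of_int (lam i)" "i - 1" i] claimB[OF i] unfolding omega_def by simp
  define S where "S = lift N ` adj_points N"
  define G where "G = lift N ` G_verts N j lam"
  have Snn: "\<forall>v\<in>S. ip N x v \<ge> 0" unfolding S_def using claimA by blast
  have SG: "{v\<in>S. ip N x v = 0} = G"
  proof
    show "{v\<in>S. ip N x v = 0} \<subseteq> G" unfolding S_def G_def using claimA by blast
  next
    show "G \<subseteq> {v\<in>S. ip N x v = 0}"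
    proof
      fix v assume "v \<in> G"
      then obtain a where a: "a \<in> G_verts N j lam" "v = lift N a" unfolding G_def by blast
      show "v \<in> {v\<in>S. ip N x v = 0}"
      proof (cases "a = (\<lambda>k. 0)")
        case True
        then show ?thesis using a ip0 zA unfolding S_def by auto
      next
        case False
        then obtain i where i: "i \<in> {1..N}" "i \<noteq> j"
          and ai: "a = (\<lambda>k. of_int (lam i) * (ebas N (i - 1) k - ebas N i k))"
          using a(1) unfolding G_verts_def by blast
        have yy: "Yv N x (i - 1) = P (i - 1)" "Yv N x i = P i" using YP i by auto
        have "ip N x v = of_int (lam i) * (P (i - 1) - P i) + 1"
          using ipg[OF i, of x] a(2) ai yy xN by simp
        also have "\<dots> = 0"
        proof -
          have "P i = P (i - 1) + of_int (lam i)" using PS[of "i - 1"] i by simp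
          moreover have "lam i = 1 \<or> lam i = -1" using lampm i by blast
          ultimately show ?thesis by auto
        qed
        finally show ?thesis using claimB[OF i] a(2) ai unfolding S_def by auto
      qed
    qed
  qed
  have GS: "G \<subseteq> S" using SG by blast
  have part2: "\<forall>p\<in>lifted_polytope N. ip N x p \<ge> 0"
    unfolding lifted_polytope_def S_def[symmetric] using conv_nonneg[OF Snn] by blast
  have part3: "{p\<in>lifted_polytope N. ip N x p = 0} = lifted_simplex N j lam"
  proof
    show "{p\<in>lifted_polytope N. ip N x p = 0} \<subseteq> lifted_simplex N j lam"
      unfolding lifted_polytope_def lifted_simplex_def S_def[symmetric] G_def[symmetric]
      using conv_zero[OF Snn] SG by auto
  next
    have "\<forall>v\<in>G. ip N x v = 0" using SG by blast
    then show "lifted_simplex N j lam \<subseteq> {p\<in>lifted_polytope N. ip N x p = 0}"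
      unfolding lifted_polytope_def lifted_simplex_def S_def[symmetric] G_def[symmetric]
      using conv_zero_rev conv_mono[OF GS] by blast
  qed
  have part4: "y = x"
    if ys: "\<forall>k. k \<notin> {1..N} \<longrightarrow> y k = 0" and yN: "y N = 1"
      and yc: "\<exists>c. \<forall>p\<in>lifted_simplex N j lam. ip N y p = c" for y
  proof -
    obtain c where c: "\<forall>p\<in>lifted_simplex N j lam. ip N y p = c" using yc by blast
    have "lift N (\<lambda>k. 0) \<in> lift N ` G_verts N j lam" using zG by (rule imageI)
    then have "lift N (\<lambda>k. 0) \<in> lifted_simplex N j lam"
      unfolding lifted_simplex_def using conv_sub by (rule subsetD[rotated])
    then have "ip N y (lift N (\<lambda>k. 0)) = c" using c by blast
    then have c0: "c = 0" using ip0 by simp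
    have step: "Yv N y i = Yv N y (i - 1) + of_int (lam i)" if i: "i \<in> {1..N}" "i \<noteq> j" for i
    proof -
      have "lift N (\<lambda>k. of_int (lam i) * (ebas N (i - 1) k - ebas N i k)) \<in> lift N ` G_verts N j lam"
        using gvG[OF i] by (rule imageI)
      then have "lift N (\<lambda>k. of_int (lam i) * (ebas N (i - 1) k - ebas N i k)) \<in> lifted_simplex N j lam"
        unfolding lifted_simplex_def using conv_sub by (rule subsetD[rotated])
      then have "ip N y (lift N (\<lambda>k. of_int (lam i) * (ebas N (i - 1) k - ebas N i k))) = 0"
        using c c0 by blast
      then have "of_int (lam i) * (Yv N y (i - 1) - Yv N y i) + 1 = 0"
        using ipg[OF i, of y] yN by simp
      moreover have "lam i = 1 \<or> lam i = -1" using lampm i by blast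
      ultimately show ?thesis by auto
    qed
    have fw: "k < j \<longrightarrow> Yv N y k = P k" for k
    proof (induction k)
      case 0
      then show ?case using P0 unfolding Yv_def by simp
    next
      case (Suc k)
      show ?case
      proof
        assume "Suc k < j"
        then have "Suc k \<in> {1..N}" "Suc k \<noteq> j" using jr by auto
        then show "Yv N y (Suc k) = P (Suc k)" using step[of "Suc k"] Suc \<open>Suc k < j\<close> PS[of k] by simp
      qed
    qed
    have bw: "d \<le> N - j \<longrightarrow> Yv N y (N - d) = P (N - d)" for d
    proof (induction d)
      case 0
      then show ?case using PN N1 unfolding Yv_def by auto
    next
      case (Suc d)
      show ?case
      proof
        assume d: "Suc d \<le> N - j"
        define k where "k = N - Suc d"
        have k1: "N - d = Suc k" using d jr unfolding k_def by auto
        have "Suc k \<in> {1..N}" "Suc k \<noteq> j" using d jr k1 by auto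
        then have "Yv N y (Suc k) = Yv N y k + of_int (lam (Suc k))" using step[of "Suc k"] by simp
        moreover have "Yv N y (Suc k) = P (Suc k)" using Suc d k1 by simp
        ultimately show "Yv N y (N - Suc d) = P (N - Suc d)" using PS[of k] k_def by simp
      qed
    qed
    have all: "Yv N y k = P k" if "k \<le> N" for k
    proof (cases "k < j")
      case True
      then show ?thesis using fw by blast
    next
      case False
      then have "N - k \<le> N - j" "N - (N - k) = k" using that by auto
      then show ?thesis using bw[of "N - k"] by simp
    qed
    show "y = x"
    proof
      fix k
      show "y k = x k"
      proof (cases "1 \<le> k \<and> k < N")
        case True
        then have "Yv N y k = y k" "Yv N x k = x k" unfolding Yv_def by auto
        then show ?thesis using all[of k] YP[of k] True by simp
      next
        case False
        then show ?thesis using ys yN xN unfolding x_def by auto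
      qed
    qed
  qed
  have part4': "\<forall>y. (\<forall>k. k \<notin> {1..N} \<longrightarrow> y k = 0) \<longrightarrow> y N = 1 \<longrightarrow>
           (\<exists>c. \<forall>p\<in>lifted_simplex N j lam. ip N y p = c) \<longrightarrow> y = x"
  proof (intro allI impI)
    fix y assume a1: "\<forall>k. k \<notin> {1..N} \<longrightarrow> y k = 0" and a2: "y N = 1"
      and a3: "\<exists>c. \<forall>p\<in>lifted_simplex N j lam. ip N y p = c"
    show "y = x" by (rule part4[OF a1 a2 a3])
  qed
  show ?thesis using xN part2 part3 part4' by (intro conjI)
qed

end
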